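(* Let $\beta\in[\tfrac12,1)$. If $\lambda$ is an eigenvalue of $\Delta_\beta$, then $\lambda$ is not a principal eigenvalue; that is, $\Delta_\beta$ has no principal eigenvalue.
   Context: Tree: for an integer $m\ge2$, the regular $m$-branching tree $\mathbb{T}_m$ has as vertices the root $\emptyset$ and all finite sequences $(\emptyset,a_1,\dots,a_k)$, $k\in\mathbb{N}$, $a_i\in\{0,\dots,m-1\}$. The level of $x=(\emptyset,a_1,\dots,a_k)$ is $|x|=k$ ($|\emptyset|=0$). The successors of $x$ are $(x,i)$; for $x\ne\emptyset$, $\hat x$ denotes its immediate predecessor. A branch is an infinite sequence $(x_n)_{n\ge0}$ with $x_0=\emptyset$ and $x_{n+1}$ a successor of $x_n$; $\partial\mathbb{T}_m$ is the set of branches. For $y=(x_n)\in\partial\mathbb{T}_m$, $\lim_{x\to y}u(x)=L$ means $\lim_{n\to\infty}u(x_n)=L$. Operator: for $\beta\in[0,1)$ let $p_\beta=1$ if $\beta=0$ and $p_\beta=\beta/(1-\beta)$ if $\beta\in(0,1)$. $\Delta_\beta u(\emptyset)=\frac1m\sum_{i=0}^{m-1}u(\emptyset,i)-u(\emptyset)$ and, for $x\ne\emptyset$, $\Delta_\beta u(x)=\big(\beta u(\hat x)+\frac{1-\beta}{m}\sum_{i=0}^{m-1}u(x,i)-u(x)\big)p_\beta^{-|x|}$. Eigenvalues: $\lambda\in\mathbb{R}$ is an eigenvalue of $\Delta_\beta$ if there is a bounded $u:\mathbb{T}_m\to\mathbb{R}$, $u\not\equiv0$, with $-\Delta_\beta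 u=\lambda u$ on $\mathbb{T}_m$ and $\lim_{x\to y}u(x)=0$ for every $y\in\partial\mathbb{T}_m$. An eigenvalue $\lambda>0$ is principal if it has a non-negative eigenfunction. *)

theory Defs
  imports Complex_Main
begin

text \<open>Vertices of the regular m-branching tree: the vertex (root, a1, ..., ak) is
  represented by the list [a1, ..., ak] with all entries < m; the root is [].
  The level is the length, successors of x are x @ [i] (i < m), and the
  immediate predecessor of a non-root vertex is butlast x.\<close>

definition tree :: "nat \<Rightarrow> nat list set" where
  "tree m = {xs. \<forall>a\<in>set xs. a < m}"

definition is_branch :: "nat \<Rightarrow> (nat \<Rightarrow> nat list) \<Rightarrow> bool" where
  "is_branch m xs \<longleftrightarrow> xs 0 = [] \<and> (\<forall>n. \<exists>i<m. xs (Suc n) = xs n @ [i])"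

definition p_beta :: "real \<Rightarrow> real" where
  "p_beta \<beta> = (if \<beta> = 0 then 1 else \<beta> / (1 - \<beta>))"

definition Delta :: "nat \<Rightarrow> real \<Rightarrow> (nat list \<Rightarrow> real) \<Rightarrow> nat list \<Rightarrow> real" where
  "Delta m \<beta> u x =
     (if x = [] then (\<Sum>i<m. u [i]) / real m - u []
      else (\<beta> * u (butlast x) + (1 - \<beta>) / real m * (\<Sum>i<m. u (x @ [i])) - u x)
           * inverse (p_beta \<beta> ^ length x))"

definition is_eigenfunction :: "nat \<Rightarrow> real \<Rightarrow> real \<Rightarrow> (nat list \<Rightarrow> real) \<Rightarrow> bool" where
  "is_eigenfunction m \<beta> lam u \<longleftrightarrow>
     (\<exists>C. \<forall>x\<in>tree m. \<bar>u x\<bar> \<le> C) \<and>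
     (\<exists>x\<in>tree m. u x \<noteq> 0) \<and>
     (\<forall>x\<in>tree m. - Delta m \<beta> u x = lam * u x) \<and>
     (\<forall>xs. is_branch m xs \<longrightarrow> (\<lambda>n. u (xs n)) \<longlonglongrightarrow> 0)"

definition is_eigenvalue :: "nat \<Rightarrow> real \<Rightarrow> real \<Rightarrow> bool" where
  "is_eigenvalue m \<beta> lam \<longleftrightarrow> (\<exists>u. is_eigenfunction m \<beta> lam u)"

definition is_principal_eigenvalue :: "nat \<Rightarrow> real \<Rightarrow> real \<Rightarrow> bool" where
  "is_principal_eigenvalue m \<beta> lam \<longleftrightarrow>
     lam > 0 \<and> (\<exists>u. is_eigenfunction m \<beta> lam u \<and> (\<forall>x\<in>tree m. u x \<ge> 0))"

end

theory Submission
  imports Defs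
begin

definition lev :: "nat \<Rightarrow> nat \<Rightarrow> nat list set" where
  "lev m k = {xs. length xs = k \<and> (\<forall>a\<in>set xs. a < m)}"

lemma lev_0: "lev m 0 = {[]}" by (auto simp: lev_def)

lemma lev_Suc: "lev m (Suc k) = (\<lambda>(x,i). x@[i]) ` (lev m k \<times> {..<m})"
proof
  show "lev m (Suc k) \<subseteq> (\<lambda>(x,i). x@[i]) ` (lev m k \<times> {..<m})"
  proof
    fix y assume y: "y \<in> lev m (Suc k)"
    then have "y \<noteq> []" by (auto simp: lev_def)
    then obtain x i where yx: "y = x @ [i]" by (metis rev_exhaust)
    with y show "y \<in> (\<lambda>(x,i). x@[i]) ` (lev m k \<times> {..<m})"
      by (auto simp: lev_def image_iff)
  qed
  show "(\<lambda>(x,i). x@[i]) ` (lev m k \<times> {..<m}) \<subseteq> lev m (Suc k)"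
    by (auto simp: lev_def)
qed

lemma sum_lev_Suc: "sum f (lev m (Suc k)) = (\<Sum>x\<in>lev m k. \<Sum>i<m. f (x@[i]))"
proof -
  have inj: "inj_on (\<lambda>(x,i). x@[i]) (lev m k \<times> {..<m})" by (auto simp: inj_on_def)
  have "sum f (lev m (Suc k)) = sum (f \<circ> (\<lambda>(x,i). x@[i])) (lev m k \<times> {..<m})"
    by (simp add: lev_Suc sum.reindex[OF inj])
  also have "\<dots> = (\<Sum>x\<in>lev m k. \<Sum>i<m. f (x@[i]))"
    by (simp add: sum.cartesian_product split_def comp_def)
  finally show ?thesis .
qed

lemma finite_lev: "finite (lev m k)"
  by (induction k) (auto simp: lev_0 lev_Suc)

lemma lev_tree: "x \<in> lev m k \<Longrightarrow> x \<in> tree m"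
  by (auto simp: lev_def tree_def)

lemma tree_lev: "x \<in> tree m \<Longrightarrow> x \<in> lev m (length x)"
  by (auto simp: lev_def tree_def)

theorem theorem1p4:
  fixes m :: nat and \<beta> lam :: real
  assumes "m \<ge> 2" and "1/2 \<le> \<beta>" and "\<beta> < 1"
      and "is_eigenvalue m \<beta> lam"
  shows "\<not> is_principal_eigenvalue m \<beta> lam"
proof
  assume "is_principal_eigenvalue m \<beta> lam"
  then obtain u where lam: "lam > 0" and ef: "is_eigenfunction m \<beta> lam u"
    and nn: "\<forall>x\<in>tree m. u x \<ge> 0"
    by (auto simp: is_principal_eigenvalue_def)
  from ef obtain x0 where x0: "x0 \<in> tree m" "u x0 \<noteq> 0"
    and eq: "\<forall>x\<in>tree m. - Delta m \<beta> u x = lam * u x"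
    by (auto simp: is_eigenfunction_def)
  define p where "p = p_beta \<beta>"
  have p: "p = \<beta> / (1 - \<beta>)" using assms by (simp add: p_def p_beta_def)
  have p1: "p \<ge> 1" using assms by (simp add: p field_simps)
  have mpos: "real m > 0" using assms by simp
  define S where "S k = (\<Sum>x\<in>lev m k. u x)" for k
  define M where "M k = S k / real m ^ k" for k
  have Snn: "S k \<ge> 0" for k
    unfolding S_def by (rule sum_nonneg) (use nn lev_tree in blast)
  have Mnn: "M k \<ge> 0" for k using Snn mpos by (simp add: M_def)
  have pt: "\<beta> * u (butlast x) + (1 - \<beta>) / real m * (\<Sum>i<m. u (x @ [i])) - u x
            = - lam * p ^ (Suc j) * u x" if x: "x \<in> lev m (Suc j)" for x j
  proof -
    have xt: "x \<in> tree m" and xn: "x \<noteq> []" and lx: "length x = Suc j"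
      using x by (auto simp: lev_def tree_def)
    have pp: "p ^ Suc j > 0" using p1 by simp
    from bspec[OF eq xt] xn lx have
      "- ((\<beta> * u (butlast x) + (1 - \<beta>) / real m * (\<Sum>i<m. u (x @ [i])) - u x)
          * inverse (p ^ Suc j)) = lam * u x"
      unfolding Delta_def p_def by (simp only: if_False)
    then have "(\<beta> * u (butlast x) + (1 - \<beta>) / real m * (\<Sum>i<m. u (x @ [i])) - u x)
          * inverse (p ^ Suc j) = - lam * u x" by simp
    then have "(\<beta> * u (butlast x) + (1 - \<beta>) / real m * (\<Sum>i<m. u (x @ [i])) - u x)
          = (- lam * u x) * p ^ Suc j" using pp
      by (metis (no_types, lifting) less_irrefl mult.commute nonzero_eq_divide_eq divide_inverse_commute)
    then show ?thesis by (simp add: algebra_simps)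
  qed
  have root: "S 1 / real m - S 0 = - lam * S 0"
  proof -
    have "[] \<in> tree m" by (simp add: tree_def)
    from bspec[OF eq this] have "- ((\<Sum>i<m. u [i]) / real m - u []) = lam * u []"
      unfolding Delta_def by (simp only: simp_thms if_True)
    moreover have "S 0 = u []" by (simp add: S_def lev_0)
    moreover have "S 1 = (\<Sum>i<m. u [i])"
      unfolding S_def using sum_lev_Suc[of u m 0] by (simp add: lev_0)
    ultimately show ?thesis by simp
  qed
  have E: "\<beta> * real m * S j + (1 - \<beta>) / real m * S (Suc (Suc j)) - S (Suc j)
           = - lam * p ^ Suc j * S (Suc j)" for j
  proof -
    have "(\<Sum>x\<in>lev m (Suc j). \<beta> * u (butlast x) + (1 - \<beta>) / real m * (\<Sum>i<m. u (x @ [i])) - u x)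
        = (\<Sum>x\<in>lev m (Suc j). - lam * p ^ (Suc j) * u x)"
      using pt by (intro sum.cong) auto
    moreover have "(\<Sum>x\<in>lev m (Suc j). u (butlast x)) = real m * S j"
      unfolding S_def sum_lev_Suc by (simp add: sum_distrib_left)
    moreover have "(\<Sum>x\<in>lev m (Suc j). (\<Sum>i<m. u (x @ [i]))) = S (Suc (Suc j))"
      unfolding S_def using sum_lev_Suc[of u m "Suc j"] by simp
    moreover have "(\<Sum>x\<in>lev m (Suc j). (1 - \<beta>) * (\<Sum>i<m. u (x @ [i])) / real m)
       = (1 - \<beta>) * (\<Sum>x\<in>lev m (Suc j). (\<Sum>i<m. u (x @ [i]))) / real m"
      by (simp add: sum_divide_distrib sum_distrib_left)
    moreover have "(\<Sum>x\<in>lev m (Suc j). - (lam * p ^ Suc j * u x)) = - (lam * p ^ Suc j * S (Suc j))"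
      by (simp add: S_def sum_distrib_left sum_negf)
    ultimately show ?thesis
      by (simp add: sum.distrib sum_subtractf sum_distrib_left[symmetric] S_def)
  qed
  have EM: "\<beta> * M j + (1 - \<beta>) * M (Suc (Suc j)) - M (Suc j) = - lam * p ^ Suc j * M (Suc j)" for j
  proof -
    have SM: "S k = M k * real m ^ k" for k using mpos by (simp add: M_def)
    define q where "q = real m ^ Suc j"
    have q: "q > 0" using mpos by (simp add: q_def)
    have a: "\<beta> * real m * S j = q * (\<beta> * M j)" by (simp add: SM q_def)
    have b: "(1 - \<beta>) / real m * S (Suc (Suc j)) = q * ((1 - \<beta>) * M (Suc (Suc j)))"
      using mpos by (simp add: SM q_def)
    have c: "S (Suc j) = q * M (Suc j)" by (simp add: SM q_def)
    from E[of j] have "q * (\<beta> * M j + (1 - \<beta>) * M (Suc (Suc j)) - M (Suc j))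
       = q * (- lam * p ^ Suc j * M (Suc j))"
      unfolding a b c by (simp add: algebra_simps)
    then have "q * ((\<beta> * M j + (1 - \<beta>) * M (Suc (Suc j)) - M (Suc j)) - (- lam * p ^ Suc j * M (Suc j))) = 0"
      by (simp only: right_diff_distrib)
    with q show ?thesis by simp
  qed
  have M1: "M 1 - M 0 = - lam * M 0" using root by (simp add: M_def)
  define D where "D k = M (Suc k) - M k" for k
  have Dle: "D k \<le> - lam * M 0" for k
  proof (induction k)
    case 0 then show ?case using M1 by (simp add: D_def)
  next
    case (Suc k)
    have "(1 - \<beta>) * D (Suc k) = \<beta> * D k - lam * p ^ Suc k * M (Suc k)"
      using EM[of k] by (simp add: D_def algebra_simps)
    also have "\<dots> \<le> \<beta> * D k"
      using lam Mnn[of "Suc k"] p1 by simp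
    also have "\<dots> \<le> (1 - \<beta>) * D k"
    proof -
      have "lam * M 0 \<ge> 0" using lam Mnn[of 0] by simp
      then have "D k \<le> 0" using Suc.IH by linarith
      then show ?thesis using assms by (simp add: mult_right_mono_neg)
    qed
    finally have "D (Suc k) \<le> D k" using assms by simp
    then show ?case using Suc by simp
  qed
  have Mle: "M k \<le> M 0 - real k * lam * M 0" for k
  proof (induction k)
    case 0 then show ?case by simp
  next
    case (Suc k)
    then show ?case using Dle[of k] by (simp add: D_def algebra_simps)
  qed
  have M0: "M 0 = 0"
  proof (rule ccontr)
    assume "M 0 \<noteq> 0"
    then have pos: "M 0 > 0" using Mnn[of 0] by simp
    obtain k :: nat where k: "real k > 1 / lam" using reals_Archimedean2 by blast
    then have "real k * lam > 1" using lam by (simp add: field_simps)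
    then have "real k * lam * M 0 > M 0" using pos by simp
    then show False using Mle[of k] Mnn[of k] by simp
  qed
  have "M k = 0" for k using Mle[of k] Mnn[of k] M0 by simp
  then have "S k = 0" for k using mpos by (simp add: M_def)
  then have "\<forall>x\<in>lev m k. u x = 0" for k
    using sum_nonneg_eq_0_iff[OF finite_lev, of m k u] nn lev_tree unfolding S_def by blast
  then show False using x0 tree_lev by blast
qed

end
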